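(* Let $\mathcal G\in\mathbb G^4_S$ have decomposition $\mathcal G=\mathcal G_{cpi}+\mathcal G_{cyclic}$, where $\mathcal G_{cpi}$ has edge weights $\omega_j+\omega_k$ and $\mathcal G_{cyclic}=u\,\mathbf b^4_{1,4,2,3}+v\,\mathbf b^4_{1,2,3,4}$, i.e. $\mathcal G_{cyclic}$ has weights $v$ on $\{V_1,V_2\},\{V_3,V_4\}$, $u-v$ on $\{V_2,V_3\},\{V_1,V_4\}$, and $-u$ on $\{V_1,V_3\},\{V_2,V_4\}$. Let $\omega=\min(\omega_1,\omega_2,\omega_3,\omega_4)$. Then $\mathcal G$ satisfies the triangle inequality ($d_{i,k}\le d_{i,j}+d_{j,k}$ for all distinct $i,j,k$) if and only if $\omega\ge-u$, $\omega\ge v$ and $\omega\ge u-v$. In particular, if some $\omega_j<0$ then $\mathcal G$ does not satisfy the triangle inequality.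
   Context: $\mathbb G^4_S$ is the space of complete undirected weighted graphs without loops on $V_1,\dots,V_4$ with edge weights $d_{i,j}=d_{j,i}$, identified with $\mathbb R^6$ with the standard inner product. $\mathcal G_{cpi}$ is the orthogonal projection onto the subspace of graphs with $d_{j,k}=\omega_j+\omega_k$ for some reals $\omega_j$, and $\mathcal G_{cyclic}=\mathcal G-\mathcal G_{cpi}$ lies in its orthogonal complement, which is spanned by $\mathbf b^4_{1,4,2,3}$ and $\mathbf b^4_{1,2,3,4}$; here $\mathbf b^4_{i,j,k,s}$ has $d_{i,j}=1,d_{j,k}=-1,d_{k,s}=1,d_{s,i}=-1$ and other entries 0. *)

theory Defs
  imports Complex_Main
begin

text \<open>A graph in G^4_S is given by its edge weights d i j for distinct vertices
  i, j in {1..4}, with d i j = d j i. Vertices V_1..V_4 are the naturals 1..4.\<close>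

definition vert4 :: "nat set" where "vert4 = {1..4}"

definition sym_graph4 :: "(nat \<Rightarrow> nat \<Rightarrow> real) \<Rightarrow> bool" where
  "sym_graph4 d \<longleftrightarrow> (\<forall>i\<in>vert4. \<forall>j\<in>vert4. i \<noteq> j \<longrightarrow> d i j = d j i)"

definition bgraph :: "nat \<Rightarrow> nat \<Rightarrow> nat \<Rightarrow> nat \<Rightarrow> nat \<Rightarrow> nat \<Rightarrow> real" where
  "bgraph i j k s x y =
     (if {x, y} = {i, j} \<or> {x, y} = {k, s} then 1
      else if {x, y} = {j, k} \<or> {x, y} = {s, i} then -1 else 0)"

definition cpi_graph :: "(nat \<Rightarrow> real) \<Rightarrow> nat \<Rightarrow> nat \<Rightarrow> real" where
  "cpi_graph \<omega> x y = \<omega> x + \<omega> y"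

definition triangle_ineq4 :: "(nat \<Rightarrow> nat \<Rightarrow> real) \<Rightarrow> bool" where
  "triangle_ineq4 d \<longleftrightarrow>
     (\<forall>i\<in>vert4. \<forall>j\<in>vert4. \<forall>k\<in>vert4.
        i \<noteq> j \<and> j \<noteq> k \<and> i \<noteq> k \<longrightarrow> d i k \<le> d i j + d j k)"

end

theory Submission
  imports Defs
begin

lemma v4: "vert4 = {1,2,3,4}" unfolding vert4_def by auto

theorem theorem17:
  fixes d :: "nat \<Rightarrow> nat \<Rightarrow> real" and \<omega> :: "nat \<Rightarrow> real" and u v :: real
  assumes "sym_graph4 d"
    and decomp: "\<forall>i\<in>vert4. \<forall>j\<in>vert4. i \<noteq> j \<longrightarrow>
        d i j = cpi_graph \<omega> i j + u * bgraph 1 4 2 3 i j + v * bgraph 1 2 3 4 i j"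
  shows "(triangle_ineq4 d \<longleftrightarrow>
            (Min (\<omega> ` vert4) \<ge> - u \<and> Min (\<omega> ` vert4) \<ge> v \<and> Min (\<omega> ` vert4) \<ge> u - v))
       \<and> ((\<exists>j\<in>vert4. \<omega> j < 0) \<longrightarrow> \<not> triangle_ineq4 d)"
proof -
  have D: "d 1 2 = \<omega> 1 + \<omega> 2 + v" "d 2 1 = \<omega> 1 + \<omega> 2 + v"
    "d 3 4 = \<omega> 3 + \<omega> 4 + v" "d 4 3 = \<omega> 3 + \<omega> 4 + v"
    "d 1 4 = \<omega> 1 + \<omega> 4 + u - v" "d 4 1 = \<omega> 1 + \<omega> 4 + u - v"
    "d 2 3 = \<omega> 2 + \<omega> 3 + u - v" "d 3 2 = \<omega> 2 + \<omega> 3 + u - v"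
    "d 1 3 = \<omega> 1 + \<omega> 3 - u" "d 3 1 = \<omega> 1 + \<omega> 3 - u"
    "d 2 4 = \<omega> 2 + \<omega> 4 - u" "d 4 2 = \<omega> 2 + \<omega> 4 - u"
    using decomp by (auto simp: v4 cpi_graph_def bgraph_def doubleton_eq_iff)
  have M: "Min (\<omega> ` vert4) = min (\<omega> 1) (min (\<omega> 2) (min (\<omega> 3) (\<omega> 4)))"
    by (simp add: v4)
  have T: "triangle_ineq4 d \<longleftrightarrow> (\<omega> 1 \<ge> -u \<and> \<omega> 1 \<ge> v \<and> \<omega> 1 \<ge> u - v \<and>
     \<omega> 2 \<ge> -u \<and> \<omega> 2 \<ge> v \<and> \<omega> 2 \<ge> u - v \<and>
     \<omega> 3 \<ge> -u \<and> \<omega> 3 \<ge> v \<and> \<omega> 3 \<ge> u - v \<and>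
     \<omega> 4 \<ge> -u \<and> \<omega> 4 \<ge> v \<and> \<omega> 4 \<ge> u - v)"
    unfolding triangle_ineq4_def v4 by (simp add: D[simplified]) linarith
  show ?thesis unfolding M T by (auto simp: v4)
qed

end
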